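(* Let $(\Omega,D)$ be a chromology and let $X:\mathbf{Seg}(\Omega)\to\mathbf{Icm}$ be a $\mathcal{W}^{\mathrm{mon}}$-pedigrad for $(\Omega,D)$. Let $f:Y\Rightarrow X$ be a morphism in the functor category $[\mathbf{Seg}(\Omega),\mathbf{Icm}]$, let $u_1,u_2:R\Rightarrow Y$ be the pullback of $f$ along itself, and let $q:Y\Rightarrow Y_X$ be the coequalizer of $(u_1,u_2)$ in $[\mathbf{Seg}(\Omega),\mathbf{Icm}]$. Then $Y_X$ is a $\mathcal{W}^{\mathrm{mon}}$-pedigrad for $(\Omega,D)$.
   Context: For $n\ge1$, $[n]=\{1,\dots,n\}$ ordered as usual, $[0]=\emptyset$. For a pre-ordered set $(\Omega,\preceq)$, a segment is a pair $(t,c)$ with $t:[n_1]\to[n_0]$ an order-preserving surjection and $c:[n_0]\to\Omega$; its domain is $[n_1]$. A morphism $(t,c)\to(t',c')$ is a pair $(f_1,f_0)$, $f_1:[n_1]\to[n_1']$ an order-preserving injection, $f_0:[n_0]\to[n_0']$ order-preserving, with $t'f_1=f_0t$ and $c'(f_0(i))\preceq c(i)$ for all $i$; this gives the category $\mathbf{Seg}(\Omega)$. $\mathbf{Seg}(\Omega\,|\,n)$ is the subcategory of segments of domain $[n]$ and morphisms with $f_1=\mathrm{id}$. A chromology $(\Omega,D)$ is a pre-ordered set $\Omega$ equipped, for each $n\ge0$, with a set $D[n]$ of cones in $\mathbf{Seg}(\Omega\,|\,n)$ (a cone being a small category $A$, a functor $\theta:A\to\mathbf{Seg}(\Omega\,|\,n)$,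 an object $\tau$ and a natural transformation from the constant functor at $\tau$ to $\theta$). $\mathbf{Icm}$ is the category of idempotent commutative monoids and monoid morphisms. $\mathcal{W}^{\mathrm{mon}}$ is the class of wide spans in $\mathbf{Icm}$, i.e. cones $\{Z\to F_i\}_{i\in[k]}$ indexed by a finite discrete category, whose induced map $Z\to\prod_{i\in[k]}F_i$ is a monomorphism in $\mathbf{Icm}$. A $\mathcal{W}^{\mathrm{mon}}$-pedigrad for $(\Omega,D)$ is a functor $\mathbf{Seg}(\Omega)\to\mathbf{Icm}$ sending, for every $n\ge0$, each cone in $D[n]$ to a cone belonging to $\mathcal{W}^{\mathrm{mon}}$. Pullbacks and coequalizers in $[\mathbf{Seg}(\Omega),\mathbf{Icm}]$ are computed objectwise. *)

theory Defs
  imports "HOL-Algebra.Group" "HOL-Library.FuncSet"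
begin

definition icm :: "'a monoid \<Rightarrow> bool" where
  "icm M \<longleftrightarrow> comm_monoid M \<and> (\<forall>x\<in>carrier M. x \<otimes>\<^bsub>M\<^esub> x = x)"

definition icm_hom :: "'a monoid \<Rightarrow> 'b monoid \<Rightarrow> ('a \<Rightarrow> 'b) \<Rightarrow> bool" where
  "icm_hom M N h \<longleftrightarrow> h \<in> carrier M \<rightarrow> carrier N
     \<and> (\<forall>x\<in>carrier M. \<forall>y\<in>carrier M. h (x \<otimes>\<^bsub>M\<^esub> y) = h x \<otimes>\<^bsub>N\<^esub> h y)
     \<and> h \<one>\<^bsub>M\<^esub> = \<one>\<^bsub>N\<^esub>"

text \<open>Test objects are taken with
  carriers in the element type of the source (this already detects every failure of
  left cancellability, since a non-injective morphism is detected by a two-element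
  submonoid of the source).\<close>
definition icm_mono :: "'a monoid \<Rightarrow> 'b monoid \<Rightarrow> ('a \<Rightarrow> 'b) \<Rightarrow> bool" where
  "icm_mono Z P h \<longleftrightarrow> icm_hom Z P h \<and>
     (\<forall>(W::'a monoid) g k. icm W \<longrightarrow> icm_hom W Z g \<longrightarrow> icm_hom W Z k \<longrightarrow>
        (\<forall>w\<in>carrier W. h (g w) = h (k w)) \<longrightarrow> (\<forall>w\<in>carrier W. g w = k w))"

definition prod_icm :: "'i set \<Rightarrow> ('i \<Rightarrow> 'a monoid) \<Rightarrow> ('i \<Rightarrow> 'a) monoid" where
  "prod_icm I F = \<lparr>carrier = (\<Pi>\<^sub>E i\<in>I. carrier (F i)),
                   mult = (\<lambda>x y. \<lambda>i\<in>I. x i \<otimes>\<^bsub>F i\<^esub> y i),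
                   one = (\<lambda>i\<in>I. \<one>\<^bsub>F i\<^esub>)\<rparr>"

text \<open>A segment (t,c) with t:[n1]->[n0], c:[n0]->Omega. Functions are stored
  extensionally: t is 0 outside [n1], c is undefined outside [n0].\<close>
datatype 'o seg = Seg (seg_n1: nat) (seg_n0: nat) (seg_t: "nat \<Rightarrow> nat") (seg_c: "nat \<Rightarrow> 'o")

definition is_seg :: "'o set \<Rightarrow> 'o seg \<Rightarrow> bool" where
  "is_seg Om s \<longleftrightarrow>
     seg_t s \<in> {1..seg_n1 s} \<rightarrow> {1..seg_n0 s}
   \<and> (\<forall>i j. 1 \<le> i \<and> i \<le> j \<and> j \<le> seg_n1 s \<longrightarrow> seg_t s i \<le> seg_t s j)
   \<and> seg_t s ` {1..seg_n1 s} = {1..seg_n0 s}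
   \<and> seg_c s \<in> {1..seg_n0 s} \<rightarrow> Om
   \<and> (\<forall>i. i \<notin> {1..seg_n1 s} \<longrightarrow> seg_t s i = 0)
   \<and> (\<forall>j. j \<notin> {1..seg_n0 s} \<longrightarrow> seg_c s j = undefined)"

datatype 'o segmor = SegMor (msrc: "'o seg") (mtgt: "'o seg") (mf1: "nat \<Rightarrow> nat") (mf0: "nat \<Rightarrow> nat")

definition is_segmor :: "'o set \<Rightarrow> ('o \<Rightarrow> 'o \<Rightarrow> bool) \<Rightarrow> 'o segmor \<Rightarrow> bool" where
  "is_segmor Om pre m \<longleftrightarrow>
     is_seg Om (msrc m) \<and> is_seg Om (mtgt m)
   \<and> mf1 m \<in> {1..seg_n1 (msrc m)} \<rightarrow> {1..seg_n1 (mtgt m)}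
   \<and> (\<forall>i j. 1 \<le> i \<and> i < j \<and> j \<le> seg_n1 (msrc m) \<longrightarrow> mf1 m i < mf1 m j)
   \<and> mf0 m \<in> {1..seg_n0 (msrc m)} \<rightarrow> {1..seg_n0 (mtgt m)}
   \<and> (\<forall>i j. 1 \<le> i \<and> i \<le> j \<and> j \<le> seg_n0 (msrc m) \<longrightarrow> mf0 m i \<le> mf0 m j)
   \<and> (\<forall>i\<in>{1..seg_n1 (msrc m)}. seg_t (mtgt m) (mf1 m i) = mf0 m (seg_t (msrc m) i))
   \<and> (\<forall>i\<in>{1..seg_n0 (msrc m)}. pre (seg_c (mtgt m) (mf0 m i)) (seg_c (msrc m) i))
   \<and> (\<forall>i. i \<notin> {1..seg_n1 (msrc m)} \<longrightarrow> mf1 m i = 0)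
   \<and> (\<forall>i. i \<notin> {1..seg_n0 (msrc m)} \<longrightarrow> mf0 m i = 0)"

definition seg_id :: "'o seg \<Rightarrow> 'o segmor" where
  "seg_id s = SegMor s s (\<lambda>i. if i \<in> {1..seg_n1 s} then i else 0)
                         (\<lambda>i. if i \<in> {1..seg_n0 s} then i else 0)"

definition seg_comp :: "'o segmor \<Rightarrow> 'o segmor \<Rightarrow> 'o segmor" where
  "seg_comp m' m = SegMor (msrc m) (mtgt m')
     (\<lambda>i. if i \<in> {1..seg_n1 (msrc m)} then mf1 m' (mf1 m i) else 0)
     (\<lambda>i. if i \<in> {1..seg_n0 (msrc m)} then mf0 m' (mf0 m i) else 0)"

definition is_seg_n :: "'o set \<Rightarrow> nat \<Rightarrow> 'o seg \<Rightarrow> bool" where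
  "is_seg_n Om n s \<longleftrightarrow> is_seg Om s \<and> seg_n1 s = n"

definition is_segmor_n :: "'o set \<Rightarrow> ('o \<Rightarrow> 'o \<Rightarrow> bool) \<Rightarrow> nat \<Rightarrow> 'o segmor \<Rightarrow> bool" where
  "is_segmor_n Om pre n m \<longleftrightarrow> is_segmor Om pre m \<and> seg_n1 (msrc m) = n \<and> seg_n1 (mtgt m) = n
     \<and> mf1 m = (\<lambda>i. if i \<in> {1..n} then i else 0)"

definition icm_functor :: "'o set \<Rightarrow> ('o \<Rightarrow> 'o \<Rightarrow> bool) \<Rightarrow> ('o seg \<Rightarrow> 'x monoid)
     \<Rightarrow> ('o segmor \<Rightarrow> 'x \<Rightarrow> 'x) \<Rightarrow> bool" where
  "icm_functor Om pre Fo Fm \<longleftrightarrow>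
     (\<forall>s. is_seg Om s \<longrightarrow> icm (Fo s))
   \<and> (\<forall>m. is_segmor Om pre m \<longrightarrow> icm_hom (Fo (msrc m)) (Fo (mtgt m)) (Fm m))
   \<and> (\<forall>s. is_seg Om s \<longrightarrow> (\<forall>x\<in>carrier (Fo s). Fm (seg_id s) x = x))
   \<and> (\<forall>m m'. is_segmor Om pre m \<longrightarrow> is_segmor Om pre m' \<longrightarrow> mtgt m = msrc m' \<longrightarrow>
        (\<forall>x\<in>carrier (Fo (msrc m)). Fm (seg_comp m' m) x = Fm m' (Fm m x)))"

definition icm_nat_trans :: "'o set \<Rightarrow> ('o \<Rightarrow> 'o \<Rightarrow> bool)
     \<Rightarrow> ('o seg \<Rightarrow> 'y monoid) \<Rightarrow> ('o segmor \<Rightarrow> 'y \<Rightarrow> 'y)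
     \<Rightarrow> ('o seg \<Rightarrow> 'x monoid) \<Rightarrow> ('o segmor \<Rightarrow> 'x \<Rightarrow> 'x)
     \<Rightarrow> ('o seg \<Rightarrow> 'y \<Rightarrow> 'x) \<Rightarrow> bool" where
  "icm_nat_trans Om pre Yo Ym Xo Xm \<alpha> \<longleftrightarrow>
     icm_functor Om pre Yo Ym \<and> icm_functor Om pre Xo Xm
   \<and> (\<forall>s. is_seg Om s \<longrightarrow> icm_hom (Yo s) (Xo s) (\<alpha> s))
   \<and> (\<forall>m. is_segmor Om pre m \<longrightarrow>
        (\<forall>y\<in>carrier (Yo (msrc m)). \<alpha> (mtgt m) (Ym m y) = Xm m (\<alpha> (msrc m) y)))"

text \<open>A cone: a small category A (objects cobj, hom-sets chom, composition ccomp g f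
  = g after f, identities cid), a functor theta = (ctheta_ob, ctheta_mor) from A to
  Seg(Omega|n), an apex tau and legs tau -> theta(a) forming a natural transformation.\<close>
record ('i, 'h, 'o) segcone =
  cobj :: "'i set"
  chom :: "'i \<Rightarrow> 'i \<Rightarrow> 'h set"
  ccomp :: "'h \<Rightarrow> 'h \<Rightarrow> 'h"
  cid :: "'i \<Rightarrow> 'h"
  ctheta_ob :: "'i \<Rightarrow> 'o seg"
  ctheta_mor :: "'h \<Rightarrow> 'o segmor"
  capex :: "'o seg"
  cleg :: "'i \<Rightarrow> 'o segmor"

definition small_cat :: "('i, 'h, 'o) segcone \<Rightarrow> bool" where
  "small_cat C \<longleftrightarrow>
     (\<forall>a\<in>cobj C. cid C a \<in> chom C a a)
   \<and> (\<forall>a\<in>cobj C. \<forall>b\<in>cobj C. \<forall>c\<in>cobj C. \<forall>f\<in>chom C a b. \<forall>g\<in>chom C b c.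
        ccomp C g f \<in> chom C a c)
   \<and> (\<forall>a\<in>cobj C. \<forall>b\<in>cobj C. \<forall>f\<in>chom C a b.
        ccomp C (cid C b) f = f \<and> ccomp C f (cid C a) = f)
   \<and> (\<forall>a\<in>cobj C. \<forall>b\<in>cobj C. \<forall>c\<in>cobj C. \<forall>d\<in>cobj C.
        \<forall>f\<in>chom C a b. \<forall>g\<in>chom C b c. \<forall>h\<in>chom C c d.
        ccomp C h (ccomp C g f) = ccomp C (ccomp C h g) f)"

definition is_seg_cone :: "'o set \<Rightarrow> ('o \<Rightarrow> 'o \<Rightarrow> bool) \<Rightarrow> nat \<Rightarrow> ('i, 'h, 'o) segcone \<Rightarrow> bool" where
  "is_seg_cone Om pre n C \<longleftrightarrow>
     small_cat C
   \<and> (\<forall>a\<in>cobj C. is_seg_n Om n (ctheta_ob C a))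
   \<and> (\<forall>a\<in>cobj C. \<forall>b\<in>cobj C. \<forall>f\<in>chom C a b.
        is_segmor_n Om pre n (ctheta_mor C f)
      \<and> msrc (ctheta_mor C f) = ctheta_ob C a \<and> mtgt (ctheta_mor C f) = ctheta_ob C b)
   \<and> (\<forall>a\<in>cobj C. ctheta_mor C (cid C a) = seg_id (ctheta_ob C a))
   \<and> (\<forall>a\<in>cobj C. \<forall>b\<in>cobj C. \<forall>c\<in>cobj C. \<forall>f\<in>chom C a b. \<forall>g\<in>chom C b c.
        ctheta_mor C (ccomp C g f) = seg_comp (ctheta_mor C g) (ctheta_mor C f))
   \<and> is_seg_n Om n (capex C)
   \<and> (\<forall>a\<in>cobj C. is_segmor_n Om pre n (cleg C a)
        \<and> msrc (cleg C a) = capex C \<and> mtgt (cleg C a) = ctheta_ob C a)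
   \<and> (\<forall>a\<in>cobj C. \<forall>b\<in>cobj C. \<forall>f\<in>chom C a b.
        seg_comp (ctheta_mor C f) (cleg C a) = cleg C b)"

definition chromology :: "'o set \<Rightarrow> ('o \<Rightarrow> 'o \<Rightarrow> bool) \<Rightarrow> (nat \<Rightarrow> ('i, 'h, 'o) segcone set) \<Rightarrow> bool" where
  "chromology Om pre D \<longleftrightarrow>
     (\<forall>x\<in>Om. pre x x)
   \<and> (\<forall>x\<in>Om. \<forall>y\<in>Om. \<forall>z\<in>Om. pre x y \<longrightarrow> pre y z \<longrightarrow> pre x z)
   \<and> (\<forall>n. \<forall>C\<in>D n. is_seg_cone Om pre n C)"

definition in_Wmon :: "('i, 'h, 'o) segcone \<Rightarrow> 'x monoid \<Rightarrow> ('i \<Rightarrow> 'x monoid)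
     \<Rightarrow> ('i \<Rightarrow> 'x \<Rightarrow> 'x) \<Rightarrow> bool" where
  "in_Wmon C Z F l \<longleftrightarrow>
     finite (cobj C)
   \<and> (\<forall>a\<in>cobj C. \<forall>b\<in>cobj C. chom C a b = (if a = b then {cid C a} else {}))
   \<and> icm_mono Z (prod_icm (cobj C) F) (\<lambda>z. \<lambda>a\<in>cobj C. l a z)"

definition pedigrad :: "'o set \<Rightarrow> ('o \<Rightarrow> 'o \<Rightarrow> bool) \<Rightarrow> (nat \<Rightarrow> ('i, 'h, 'o) segcone set)
     \<Rightarrow> ('o seg \<Rightarrow> 'x monoid) \<Rightarrow> ('o segmor \<Rightarrow> 'x \<Rightarrow> 'x) \<Rightarrow> bool" where
  "pedigrad Om pre D Xo Xm \<longleftrightarrow>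
     icm_functor Om pre Xo Xm
   \<and> (\<forall>n. \<forall>C\<in>D n. in_Wmon C (Xo (capex C)) (\<lambda>a. Xo (ctheta_ob C a))
                       (\<lambda>a. Xm (cleg C a)))"

section \<open>Pullback and coequalizer in [Seg(Omega), Icm], computed objectwise\<close>

definition kp_obj :: "('o seg \<Rightarrow> 'y monoid) \<Rightarrow> ('o seg \<Rightarrow> 'y \<Rightarrow> 'x) \<Rightarrow> 'o seg \<Rightarrow> ('y \<times> 'y) monoid" where
  "kp_obj Yo f s = \<lparr>carrier = {(a, b). a \<in> carrier (Yo s) \<and> b \<in> carrier (Yo s) \<and> f s a = f s b},
                    mult = (\<lambda>(a, b) (c, d). (a \<otimes>\<^bsub>Yo s\<^esub> c, b \<otimes>\<^bsub>Yo s\<^esub> d)),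
                    one = (\<one>\<^bsub>Yo s\<^esub>, \<one>\<^bsub>Yo s\<^esub>)\<rparr>"

definition kp_mor :: "('o segmor \<Rightarrow> 'y \<Rightarrow> 'y) \<Rightarrow> 'o segmor \<Rightarrow> 'y \<times> 'y \<Rightarrow> 'y \<times> 'y" where
  "kp_mor Ym m = (\<lambda>(a, b). (Ym m a, Ym m b))"

definition icm_cong :: "'y monoid \<Rightarrow> ('y \<times> 'y) set \<Rightarrow> bool" where
  "icm_cong M \<theta> \<longleftrightarrow> equiv (carrier M) \<theta>
     \<and> (\<forall>a b c d. (a, b) \<in> \<theta> \<longrightarrow> (c, d) \<in> \<theta> \<longrightarrow> (a \<otimes>\<^bsub>M\<^esub> c, b \<otimes>\<^bsub>M\<^esub> d) \<in> \<theta>)"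

definition gen_cong :: "'y monoid \<Rightarrow> ('y \<times> 'y) set \<Rightarrow> ('y \<times> 'y) set" where
  "gen_cong M S = \<Inter> {\<theta>. icm_cong M \<theta> \<and> S \<subseteq> \<theta>}"

definition quot_icm :: "'y monoid \<Rightarrow> ('y \<times> 'y) set \<Rightarrow> 'y set monoid" where
  "quot_icm M \<theta> = \<lparr>carrier = carrier M // \<theta>,
                   mult = (\<lambda>A B. \<theta> `` {a \<otimes>\<^bsub>M\<^esub> b | a b. a \<in> A \<and> b \<in> B}),
                   one = \<theta> `` {\<one>\<^bsub>M\<^esub>}\<rparr>"

definition coeq_cong :: "('o seg \<Rightarrow> 'r monoid) \<Rightarrow> ('o seg \<Rightarrow> 'y monoid)
     \<Rightarrow> ('o seg \<Rightarrow> 'r \<Rightarrow> 'y) \<Rightarrow> ('o seg \<Rightarrow> 'r \<Rightarrow> 'y) \<Rightarrow> 'o seg \<Rightarrow> ('y \<times> 'y) set" where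
  "coeq_cong Ro Yo u1 u2 s = gen_cong (Yo s) {(u1 s r, u2 s r) | r. r \<in> carrier (Ro s)}"

definition coeq_obj :: "('o seg \<Rightarrow> 'r monoid) \<Rightarrow> ('o seg \<Rightarrow> 'y monoid)
     \<Rightarrow> ('o seg \<Rightarrow> 'r \<Rightarrow> 'y) \<Rightarrow> ('o seg \<Rightarrow> 'r \<Rightarrow> 'y) \<Rightarrow> 'o seg \<Rightarrow> 'y set monoid" where
  "coeq_obj Ro Yo u1 u2 s = quot_icm (Yo s) (coeq_cong Ro Yo u1 u2 s)"

definition coeq_mor :: "('o seg \<Rightarrow> 'r monoid) \<Rightarrow> ('o seg \<Rightarrow> 'y monoid)
     \<Rightarrow> ('o seg \<Rightarrow> 'r \<Rightarrow> 'y) \<Rightarrow> ('o seg \<Rightarrow> 'r \<Rightarrow> 'y) \<Rightarrow> ('o segmor \<Rightarrow> 'y \<Rightarrow> 'y)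
     \<Rightarrow> 'o segmor \<Rightarrow> 'y set \<Rightarrow> 'y set" where
  "coeq_mor Ro Yo u1 u2 Ym m A = coeq_cong Ro Yo u1 u2 (mtgt m) `` (Ym m ` A)"

end

theory Submission
  imports Defs
begin

definition kerrel :: "'y monoid \<Rightarrow> ('y \<Rightarrow> 'x) \<Rightarrow> ('y \<times> 'y) set" where
  "kerrel M h = {(a, b). a \<in> carrier M \<and> b \<in> carrier M \<and> h a = h b}"

lemma kerrel_cong:
  assumes "monoid M" "icm_hom M N h"
  shows "icm_cong M (kerrel M h)"
proof -
  have "equiv (carrier M) (kerrel M h)"
    unfolding equiv_def refl_on_def sym_def trans_def kerrel_def by auto
  moreover have "(a \<otimes>\<^bsub>M\<^esub> c, b \<otimes>\<^bsub>M\<^esub> d) \<in> kerrel M h"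
    if "(a, b) \<in> kerrel M h" "(c, d) \<in> kerrel M h" for a b c d
  proof -
    have "a \<otimes>\<^bsub>M\<^esub> c \<in> carrier M" "b \<otimes>\<^bsub>M\<^esub> d \<in> carrier M"
      using that assms(1) unfolding kerrel_def by (auto intro: monoid.m_closed)
    thus ?thesis using that assms unfolding kerrel_def icm_hom_def by auto
  qed
  ultimately show ?thesis unfolding icm_cong_def by blast
qed

lemma gen_cong_self:
  assumes "icm_cong M K" shows "gen_cong M K = K"
  using assms unfolding gen_cong_def by blast

lemma img_class:
  assumes "equiv A r" "b \<in> B" "\<forall>z\<in>B. (b, z) \<in> r"
  shows "r `` B = r `` {b}"
  using assms unfolding equiv_def trans_def sym_def by blast

lemma cls_mult:
  assumes "icm_cong M r" "monoid M" "a \<in> carrier M" "b \<in> carrier M"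
  shows "mult (quot_icm M r) (r``{a}) (r``{b}) = r``{a \<otimes>\<^bsub>M\<^esub> b}"
proof -
  have eq: "equiv (carrier M) r" using assms(1) unfolding icm_cong_def by blast
  let ?S = "{x \<otimes>\<^bsub>M\<^esub> y | x y. x \<in> r``{a} \<and> y \<in> r``{b}}"
  have "a \<otimes>\<^bsub>M\<^esub> b \<in> ?S" using eq assms(3,4) equiv_class_self by fastforce
  moreover have "\<forall>z\<in>?S. (a \<otimes>\<^bsub>M\<^esub> b, z) \<in> r"
    using assms(1) unfolding icm_cong_def by blast
  ultimately have "r `` ?S = r `` {a \<otimes>\<^bsub>M\<^esub> b}" using img_class[OF eq] by blast
  thus ?thesis unfolding quot_icm_def by simp
qed

lemma quot_icm:
  assumes "icm M" "icm_cong M r"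
  shows "icm (quot_icm M r)"
proof -
  have cm: "comm_monoid M" and idem: "\<forall>x\<in>carrier M. x \<otimes>\<^bsub>M\<^esub> x = x"
    using assms(1) unfolding icm_def by auto
  have mo: "monoid M" using cm comm_monoid.axioms(1) by blast
  have eq: "equiv (carrier M) r" using assms(2) unfolding icm_cong_def by blast
  let ?Q = "quot_icm M r"
  have car: "carrier ?Q = carrier M // r" unfolding quot_icm_def by simp
  have one: "one ?Q = r``{\<one>\<^bsub>M\<^esub>}" unfolding quot_icm_def by simp
  note cm_ = cls_mult[OF assms(2) mo]
  have "comm_monoid ?Q"
  proof (rule comm_monoidI)
    fix x y assume "x \<in> carrier ?Q" "y \<in> carrier ?Q"
    then obtain a b where "a \<in> carrier M" "b \<in> carrier M" "x = r``{a}" "y = r``{b}"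
      unfolding car by (auto elim!: quotientE)
    thus "x \<otimes>\<^bsub>?Q\<^esub> y \<in> carrier ?Q" using cm_ car mo
      by (simp add: quotientI monoid.m_closed)
    show "x \<otimes>\<^bsub>?Q\<^esub> y = y \<otimes>\<^bsub>?Q\<^esub> x" using cm_ \<open>a \<in> _\<close> \<open>b \<in> _\<close> \<open>x = _\<close> \<open>y = _\<close>
      by (simp add: comm_monoid.m_comm[OF cm])
  next
    show "\<one>\<^bsub>?Q\<^esub> \<in> carrier ?Q" using one car mo by (simp add: quotientI monoid.one_closed)
  next
    fix x y z assume "x \<in> carrier ?Q" "y \<in> carrier ?Q" "z \<in> carrier ?Q"
    then obtain a b c where "a \<in> carrier M" "b \<in> carrier M" "c \<in> carrier M"
       "x = r``{a}" "y = r``{b}" "z = r``{c}"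
      unfolding car by (auto elim!: quotientE)
    thus "x \<otimes>\<^bsub>?Q\<^esub> y \<otimes>\<^bsub>?Q\<^esub> z = x \<otimes>\<^bsub>?Q\<^esub> (y \<otimes>\<^bsub>?Q\<^esub> z)"
      using cm_ mo by (simp add: monoid.m_closed monoid.m_assoc)
  next
    fix x assume "x \<in> carrier ?Q"
    then obtain a where "a \<in> carrier M" "x = r``{a}"
      unfolding car by (auto elim!: quotientE)
    thus "\<one>\<^bsub>?Q\<^esub> \<otimes>\<^bsub>?Q\<^esub> x = x"
      using cm_ mo one by (simp add: monoid.one_closed)
  qed
  moreover have "\<forall>x\<in>carrier ?Q. x \<otimes>\<^bsub>?Q\<^esub> x = x"
  proof
    fix x assume "x \<in> carrier ?Q"
    then obtain a where "a \<in> carrier M" "x = r``{a}"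
      unfolding car by (auto elim!: quotientE)
    thus "x \<otimes>\<^bsub>?Q\<^esub> x = x" using cm_ idem by simp
  qed
  ultimately show ?thesis unfolding icm_def by blast
qed


lemma mono_inj_aux:
  assumes "icm Z" "icm_mono Z P h" "x \<in> carrier Z" "y \<in> carrier Z" "h x = h y"
    "x \<noteq> \<one>\<^bsub>Z\<^esub>"
  shows "x = y"
proof -
  have cm: "comm_monoid Z" and idem: "\<forall>x\<in>carrier Z. x \<otimes>\<^bsub>Z\<^esub> x = x"
    using assms(1) unfolding icm_def by auto
  have mo: "monoid Z" using cm comm_monoid.axioms(1) by blast
  define W where "W = \<lparr>carrier = {\<one>\<^bsub>Z\<^esub>, x}, mult = mult Z, one = \<one>\<^bsub>Z\<^esub>\<rparr>"
  have oc: "\<one>\<^bsub>Z\<^esub> \<in> carrier Z" using mo by (simp add: monoid.one_closed)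
  have xx: "x \<otimes>\<^bsub>Z\<^esub> x = x" "y \<otimes>\<^bsub>Z\<^esub> y = y" using idem assms(3,4) by auto
  have l1: "\<And>z. z \<in> carrier Z \<Longrightarrow> \<one>\<^bsub>Z\<^esub> \<otimes>\<^bsub>Z\<^esub> z = z"
   and r1: "\<And>z. z \<in> carrier Z \<Longrightarrow> z \<otimes>\<^bsub>Z\<^esub> \<one>\<^bsub>Z\<^esub> = z"
    using mo by (auto simp: monoid.l_one monoid.r_one)
  have "comm_monoid W"
    apply (rule comm_monoidI)
    using xx l1 r1 oc assms(3) unfolding W_def
    by (auto simp: comm_monoid.m_comm[OF cm] monoid.m_assoc[OF mo])
  hence iW: "icm W" unfolding icm_def W_def using xx l1 oc by auto
  have hg: "icm_hom W Z id" unfolding icm_hom_def W_def using oc assms(3) by auto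
  define k where "k = (\<lambda>w. if w = x then y else \<one>\<^bsub>Z\<^esub>)"
  have hk: "icm_hom W Z k" unfolding icm_hom_def W_def k_def
    using oc assms(3,4,6) xx l1 r1 by auto
  have "\<forall>w\<in>carrier W. h (id w) = h (k w)" unfolding W_def k_def using assms(5) by auto
  hence "\<forall>w\<in>carrier W. id w = k w"
    using assms(2) iW hg hk unfolding icm_mono_def by blast
  thus ?thesis unfolding W_def k_def by auto
qed

lemma mono_inj:
  assumes "icm Z" "icm_mono Z P h" "x \<in> carrier Z" "y \<in> carrier Z" "h x = h y"
  shows "x = y"
proof (cases "x = \<one>\<^bsub>Z\<^esub>")
  case True
  show ?thesis
  proof (cases "y = \<one>\<^bsub>Z\<^esub>")
    case False
    then show ?thesis using mono_inj_aux[OF assms(1,2,4,3)] assms(5) by metis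
  qed (use True in simp)
next
  case False
  then show ?thesis using mono_inj_aux[OF assms] by blast
qed

lemma inj_mono:
  assumes "icm_hom Z P h" "\<forall>x\<in>carrier Z. \<forall>y\<in>carrier Z. h x = h y \<longrightarrow> x = y"
  shows "icm_mono Z P h"
  unfolding icm_mono_def using assms unfolding icm_hom_def Pi_def by blast


theorem mainTheorem9:
  fixes Om :: "'o set" and pre :: "'o \<Rightarrow> 'o \<Rightarrow> bool"
    and D :: "nat \<Rightarrow> ('i, 'h, 'o) segcone set"
    and Xo :: "'o seg \<Rightarrow> 'x monoid" and Xm :: "'o segmor \<Rightarrow> 'x \<Rightarrow> 'x"
    and Yo :: "'o seg \<Rightarrow> 'y monoid" and Ym :: "'o segmor \<Rightarrow> 'y \<Rightarrow> 'y"
    and f :: "'o seg \<Rightarrow> 'y \<Rightarrow> 'x"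
  assumes "chromology Om pre D"
    and "pedigrad Om pre D Xo Xm"
    and "icm_nat_trans Om pre Yo Ym Xo Xm f"
  shows "pedigrad Om pre D
           (coeq_obj (kp_obj Yo f) Yo (\<lambda>s. fst) (\<lambda>s. snd))
           (coeq_mor (kp_obj Yo f) Yo (\<lambda>s. fst) (\<lambda>s. snd) Ym)"
proof -
  define K where "K = (\<lambda>s. kerrel (Yo s) (f s))"
  define Q where "Q = coeq_obj (kp_obj Yo f) Yo (\<lambda>s. fst) (\<lambda>s. snd)"
  define QM where "QM = coeq_mor (kp_obj Yo f) Yo (\<lambda>s. fst) (\<lambda>s. snd) Ym"
  have FY: "icm_functor Om pre Yo Ym" and FX: "icm_functor Om pre Xo Xm"
    and fhom: "\<And>s. is_seg Om s \<Longrightarrow> icm_hom (Yo s) (Xo s) (f s)"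
    and nat: "\<And>m y. is_segmor Om pre m \<Longrightarrow> y \<in> carrier (Yo (msrc m)) \<Longrightarrow>
        f (mtgt m) (Ym m y) = Xm m (f (msrc m) y)"
    using assms(3) unfolding icm_nat_trans_def by auto
  have icmY: "\<And>s. is_seg Om s \<Longrightarrow> icm (Yo s)" using FY unfolding icm_functor_def by auto
  have icmX: "\<And>s. is_seg Om s \<Longrightarrow> icm (Xo s)" using FX unfolding icm_functor_def by auto
  have homY: "\<And>m. is_segmor Om pre m \<Longrightarrow> icm_hom (Yo (msrc m)) (Yo (mtgt m)) (Ym m)"
    using FY unfolding icm_functor_def by auto
  have homX: "\<And>m. is_segmor Om pre m \<Longrightarrow> icm_hom (Xo (msrc m)) (Xo (mtgt m)) (Xm m)"
    using FX unfolding icm_functor_def by auto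
  have idY: "\<And>s x. is_seg Om s \<Longrightarrow> x \<in> carrier (Yo s) \<Longrightarrow> Ym (seg_id s) x = x"
    using FY unfolding icm_functor_def by auto
  have compY: "\<And>m m' x. is_segmor Om pre m \<Longrightarrow> is_segmor Om pre m' \<Longrightarrow> mtgt m = msrc m' \<Longrightarrow>
      x \<in> carrier (Yo (msrc m)) \<Longrightarrow> Ym (seg_comp m' m) x = Ym m' (Ym m x)"
    using FY unfolding icm_functor_def by auto
  have segs: "is_seg Om (msrc m)" "is_seg Om (mtgt m)" if "is_segmor Om pre m" for m
    using that unfolding is_segmor_def by auto
  have moY: "\<And>s. is_seg Om s \<Longrightarrow> monoid (Yo s)"
    using icmY unfolding icm_def using comm_monoid.axioms(1) by blast
  have cong: "\<And>s. is_seg Om s \<Longrightarrow> icm_cong (Yo s) (K s)"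
    unfolding K_def using kerrel_cong moY fhom by blast
  have eqv: "\<And>s. is_seg Om s \<Longrightarrow> equiv (carrier (Yo s)) (K s)"
    using cong unfolding icm_cong_def by blast
  have cc: "coeq_cong (kp_obj Yo f) Yo (\<lambda>s. fst) (\<lambda>s. snd) s = K s" if "is_seg Om s" for s
  proof -
    have "{(fst r, snd r) | r. r \<in> carrier (kp_obj Yo f s)} = K s"
      unfolding K_def kerrel_def kp_obj_def by force
    thus ?thesis unfolding coeq_cong_def using gen_cong_self[OF cong[OF that]] by simp
  qed
  have QO: "\<And>s. is_seg Om s \<Longrightarrow> Q s = quot_icm (Yo s) (K s)"
    unfolding Q_def coeq_obj_def using cc by simp
  have carQ: "\<And>s. is_seg Om s \<Longrightarrow> carrier (Q s) = carrier (Yo s) // K s"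
    using QO unfolding quot_icm_def by simp
  have QMd: "\<And>m A. is_segmor Om pre m \<Longrightarrow> QM m A = K (mtgt m) `` (Ym m ` A)"
    unfolding QM_def coeq_mor_def using cc segs by simp
  have Kin: "\<And>s a b. (a, b) \<in> K s \<longleftrightarrow> a \<in> carrier (Yo s) \<and> b \<in> carrier (Yo s) \<and> f s a = f s b"
    unfolding K_def kerrel_def by simp
  have mor: "QM m (K (msrc m) `` {a}) = K (mtgt m) `` {Ym m a}"
    if m: "is_segmor Om pre m" and a: "a \<in> carrier (Yo (msrc m))" for m a
  proof -
    have "K (mtgt m) `` (Ym m ` (K (msrc m) `` {a})) = K (mtgt m) `` {Ym m a}"
    proof (rule img_class[OF eqv[OF segs(2)[OF m]]])
      show "Ym m a \<in> Ym m ` (K (msrc m) `` {a})"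
        using equiv_class_self[OF eqv[OF segs(1)[OF m]] a] by blast
      show "\<forall>z\<in>Ym m ` (K (msrc m) `` {a}). (Ym m a, z) \<in> K (mtgt m)"
      proof
        fix z assume "z \<in> Ym m ` (K (msrc m) `` {a})"
        then obtain a' where a': "(a, a') \<in> K (msrc m)" "z = Ym m a'" by blast
        have c: "a' \<in> carrier (Yo (msrc m))" "f (msrc m) a = f (msrc m) a'"
          using a' Kin by auto
        have "Ym m a \<in> carrier (Yo (mtgt m))" "Ym m a' \<in> carrier (Yo (mtgt m))"
          using homY[OF m] a c unfolding icm_hom_def by auto
        moreover have "f (mtgt m) (Ym m a) = f (mtgt m) (Ym m a')"
          using nat[OF m a] nat[OF m c(1)] c(2) by simp
        ultimately show "(Ym m a, z) \<in> K (mtgt m)" using a' Kin by simp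
      qed
    qed
    thus ?thesis using QMd[OF m] by simp
  qed
  have FQ: "icm_functor Om pre Q QM"
    unfolding icm_functor_def
  proof (intro conjI allI impI ballI)
    fix s assume "is_seg Om s"
    thus "icm (Q s)" using QO quot_icm icmY cong by metis
  next
    fix m assume m: "is_segmor Om pre m"
    note sm = segs[OF m]
    note cl = cls_mult[OF cong[OF sm(1)] moY[OF sm(1)]] cls_mult[OF cong[OF sm(2)] moY[OF sm(2)]]
    have hY: "icm_hom (Yo (msrc m)) (Yo (mtgt m)) (Ym m)" using homY[OF m] .
    show "icm_hom (Q (msrc m)) (Q (mtgt m)) (QM m)"
      unfolding icm_hom_def
    proof (intro conjI ballI)
      show "QM m \<in> carrier (Q (msrc m)) \<rightarrow> carrier (Q (mtgt m))"
      proof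
        fix x assume "x \<in> carrier (Q (msrc m))"
        then obtain a where a: "a \<in> carrier (Yo (msrc m))" "x = K (msrc m) `` {a}"
          using carQ[OF sm(1)] by (auto elim!: quotientE)
        thus "QM m x \<in> carrier (Q (mtgt m))"
          using mor[OF m a(1)] carQ[OF sm(2)] hY unfolding icm_hom_def
          by (auto intro!: quotientI)
      qed
    next
      fix x y assume "x \<in> carrier (Q (msrc m))" "y \<in> carrier (Q (msrc m))"
      then obtain a b where a: "a \<in> carrier (Yo (msrc m))" "x = K (msrc m) `` {a}"
        and b: "b \<in> carrier (Yo (msrc m))" "y = K (msrc m) `` {b}"
        using carQ[OF sm(1)] by (auto elim!: quotientE)
      have ab: "a \<otimes>\<^bsub>Yo (msrc m)\<^esub> b \<in> carrier (Yo (msrc m))"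
        using a b moY[OF sm(1)] by (simp add: monoid.m_closed)
      have ya: "Ym m a \<in> carrier (Yo (mtgt m))" "Ym m b \<in> carrier (Yo (mtgt m))"
        using hY a b unfolding icm_hom_def by auto
      show "QM m (x \<otimes>\<^bsub>Q (msrc m)\<^esub> y) = QM m x \<otimes>\<^bsub>Q (mtgt m)\<^esub> QM m y"
        using a b QO[OF sm(1)] QO[OF sm(2)] cl mor[OF m] ab ya hY
        unfolding icm_hom_def by simp
    next
      have o: "\<one>\<^bsub>Yo (msrc m)\<^esub> \<in> carrier (Yo (msrc m))"
        using moY[OF sm(1)] by (simp add: monoid.one_closed)
      show "QM m \<one>\<^bsub>Q (msrc m)\<^esub> = \<one>\<^bsub>Q (mtgt m)\<^esub>"
        using QO[OF sm(1)] QO[OF sm(2)] mor[OF m o] hY unfolding icm_hom_def quot_icm_def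
        by simp
    qed
  next
    fix s x assume s: "is_seg Om s" and x: "x \<in> carrier (Q s)"
    then obtain a where a: "a \<in> carrier (Yo s)" "x = K s `` {a}"
      using carQ[OF s] by (auto elim!: quotientE)
    have sub: "K s `` {a} \<subseteq> carrier (Yo s)" using Kin by auto
    have "Ym (seg_id s) ` (K s `` {a}) = K s `` {a}"
    proof -
      have "Ym (seg_id s) ` (K s `` {a}) = id ` (K s `` {a})"
        using idY[OF s] sub by (intro image_cong) auto
      thus ?thesis by simp
    qed
    moreover have "K s `` (K s `` {a}) = K s `` {a}"
      using img_class[OF eqv[OF s], of a "K s `` {a}"] equiv_class_self[OF eqv[OF s] a(1)]
      by blast
    ultimately show "QM (seg_id s) x = x"
      unfolding QM_def coeq_mor_def using cc[OF s] a by (simp add: seg_id_def)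
  next
    fix m m' x assume m: "is_segmor Om pre m" and m': "is_segmor Om pre m'"
      and e: "mtgt m = msrc m'" and x: "x \<in> carrier (Q (msrc m))"
    then obtain a where a: "a \<in> carrier (Yo (msrc m))" "x = K (msrc m) `` {a}"
      using carQ[OF segs(1)[OF m]] by (auto elim!: quotientE)
    have ya: "Ym m a \<in> carrier (Yo (msrc m'))"
      using homY[OF m] a e unfolding icm_hom_def by auto
    have rhs: "QM m' (QM m x) = K (mtgt m') `` {Ym m' (Ym m a)}"
      using mor[OF m a(1)] mor[OF m' ya] a e by simp
    have "K (mtgt m') `` (Ym (seg_comp m' m) ` (K (msrc m) `` {a}))
          = K (mtgt m') `` {Ym m' (Ym m a)}"
    proof (rule img_class[OF eqv[OF segs(2)[OF m']]])
      show "Ym m' (Ym m a) \<in> Ym (seg_comp m' m) ` (K (msrc m) `` {a})"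
        using equiv_class_self[OF eqv[OF segs(1)[OF m]] a(1)] compY[OF m m' e a(1)]
        by (metis image_eqI)
      show "\<forall>z\<in>Ym (seg_comp m' m) ` (K (msrc m) `` {a}). (Ym m' (Ym m a), z) \<in> K (mtgt m')"
      proof
        fix z assume "z \<in> Ym (seg_comp m' m) ` (K (msrc m) `` {a})"
        then obtain a' where a': "(a, a') \<in> K (msrc m)" "z = Ym (seg_comp m' m) a'" by blast
        have c: "a' \<in> carrier (Yo (msrc m))" "f (msrc m) a = f (msrc m) a'"
          using a' Kin by auto
        have z: "z = Ym m' (Ym m a')" using a' compY[OF m m' e c(1)] by simp
        have ya': "Ym m a' \<in> carrier (Yo (msrc m'))"
          using homY[OF m] c e unfolding icm_hom_def by auto
        have "Ym m' (Ym m a) \<in> carrier (Yo (mtgt m'))" "Ym m' (Ym m a') \<in> carrier (Yo (mtgt m'))"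
          using homY[OF m'] ya ya' unfolding icm_hom_def by auto
        moreover have "f (mtgt m') (Ym m' (Ym m a)) = f (mtgt m') (Ym m' (Ym m a'))"
          using nat[OF m' ya] nat[OF m' ya'] nat[OF m a(1)] nat[OF m c(1)] c(2) e by simp
        ultimately show "(Ym m' (Ym m a), z) \<in> K (mtgt m')" using z Kin by simp
      qed
    qed
    moreover have "mtgt (seg_comp m' m) = mtgt m'" by (simp add: seg_comp_def)
    ultimately show "QM (seg_comp m' m) x = QM m' (QM m x)"
      using rhs a unfolding QM_def coeq_mor_def using cc[OF segs(2)[OF m']] by simp
  qed
  have homQ: "\<And>m. is_segmor Om pre m \<Longrightarrow> icm_hom (Q (msrc m)) (Q (mtgt m)) (QM m)"
    using FQ unfolding icm_functor_def by auto
  have "\<forall>n. \<forall>C\<in>D n. in_Wmon C (Q (capex C)) (\<lambda>a. Q (ctheta_ob C a)) (\<lambda>a. QM (cleg C a))"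
  proof (intro allI ballI)
    fix n C assume C: "C \<in> D n"
    have sc: "is_seg_cone Om pre n C" using assms(1) C unfolding chromology_def by blast
    define I where "I = cobj C"
    define ap where "ap = capex C"
    have ap: "is_seg Om ap" using sc unfolding is_seg_cone_def is_seg_n_def ap_def by blast
    have leg: "\<And>a. a \<in> I \<Longrightarrow> is_segmor Om pre (cleg C a) \<and> msrc (cleg C a) = ap
        \<and> mtgt (cleg C a) = ctheta_ob C a"
      using sc unfolding is_seg_cone_def is_segmor_n_def I_def ap_def by blast
    have WX: "in_Wmon C (Xo (capex C)) (\<lambda>a. Xo (ctheta_ob C a)) (\<lambda>a. Xm (cleg C a))"
      using assms(2) C unfolding pedigrad_def by blast
    hence fin: "finite (cobj C)"
      and disc: "\<forall>a\<in>cobj C. \<forall>b\<in>cobj C. chom C a b = (if a = b then {cid C a} else {})"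
      and monoX: "icm_mono (Xo ap) (prod_icm I (\<lambda>a. Xo (ctheta_ob C a)))
                     (\<lambda>z. \<lambda>a\<in>I. Xm (cleg C a) z)"
      unfolding in_Wmon_def I_def ap_def by auto
    define h where "h = (\<lambda>z. \<lambda>a\<in>I. QM (cleg C a) z)"
    have hh: "icm_hom (Q ap) (prod_icm I (\<lambda>a. Q (ctheta_ob C a))) h"
      unfolding icm_hom_def
    proof (intro conjI ballI)
      show "h \<in> carrier (Q ap) \<rightarrow> carrier (prod_icm I (\<lambda>a. Q (ctheta_ob C a)))"
        unfolding h_def prod_icm_def using homQ leg unfolding icm_hom_def by fastforce
    next
      fix x y assume xy: "x \<in> carrier (Q ap)" "y \<in> carrier (Q ap)"
      have "QM (cleg C i) (x \<otimes>\<^bsub>Q ap\<^esub> y) = QM (cleg C i) x \<otimes>\<^bsub>Q (ctheta_ob C i)\<^esub> QM (cleg C i) y"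
        if "i \<in> I" for i
        using homQ[of "cleg C i"] leg[OF that] xy unfolding icm_hom_def by metis
      thus "h (x \<otimes>\<^bsub>Q ap\<^esub> y) = h x \<otimes>\<^bsub>prod_icm I (\<lambda>a. Q (ctheta_ob C a))\<^esub> h y"
        unfolding h_def prod_icm_def
        by (intro ext) (auto simp: restrict_def)
    next
      have "QM (cleg C i) \<one>\<^bsub>Q ap\<^esub> = \<one>\<^bsub>Q (ctheta_ob C i)\<^esub>" if "i \<in> I" for i
        using homQ[of "cleg C i"] leg[OF that] unfolding icm_hom_def by metis
      thus "h \<one>\<^bsub>Q ap\<^esub> = \<one>\<^bsub>prod_icm I (\<lambda>a. Q (ctheta_ob C a))\<^esub>"
        unfolding h_def prod_icm_def
        by (intro ext) (auto simp: restrict_def)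
    qed
    have inj: "\<forall>x\<in>carrier (Q ap). \<forall>y\<in>carrier (Q ap). h x = h y \<longrightarrow> x = y"
    proof (intro ballI impI)
      fix x y assume "x \<in> carrier (Q ap)" "y \<in> carrier (Q ap)" and hxy: "h x = h y"
      then obtain a b where a: "a \<in> carrier (Yo ap)" "x = K ap `` {a}"
        and b: "b \<in> carrier (Yo ap)" "y = K ap `` {b}"
        using carQ[OF ap] by (auto elim!: quotientE)
      have "Xm (cleg C i) (f ap a) = Xm (cleg C i) (f ap b)" if i: "i \<in> I" for i
      proof -
        note l = leg[OF i]
        have "QM (cleg C i) x = QM (cleg C i) y" using hxy i unfolding h_def
          by (metis restrict_apply')
        hence "K (ctheta_ob C i) `` {Ym (cleg C i) a} = K (ctheta_ob C i) `` {Ym (cleg C i) b}"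
          using mor[of "cleg C i"] l a b by simp
        moreover have "Ym (cleg C i) a \<in> carrier (Yo (ctheta_ob C i))"
          "Ym (cleg C i) b \<in> carrier (Yo (ctheta_ob C i))"
          using homY[of "cleg C i"] l a b unfolding icm_hom_def by auto
        ultimately have "(Ym (cleg C i) a, Ym (cleg C i) b) \<in> K (ctheta_ob C i)"
          using eq_equiv_class_iff[OF eqv[OF segs(2)[of "cleg C i"]]] l by metis
        hence "f (ctheta_ob C i) (Ym (cleg C i) a) = f (ctheta_ob C i) (Ym (cleg C i) b)"
          using Kin by blast
        thus ?thesis using nat[of "cleg C i"] l a b by metis
      qed
      hence "(\<lambda>i\<in>I. Xm (cleg C i) (f ap a)) = (\<lambda>i\<in>I. Xm (cleg C i) (f ap b))"
        by (intro ext) (simp add: restrict_def)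
      moreover have "f ap a \<in> carrier (Xo ap)" "f ap b \<in> carrier (Xo ap)"
        using fhom[OF ap] a b unfolding icm_hom_def by auto
      ultimately have "f ap a = f ap b"
        using mono_inj[OF icmX[OF ap] monoX] by blast
      hence "(a, b) \<in> K ap" using Kin a b by blast
      thus "x = y" using a b eq_equiv_class_iff[OF eqv[OF ap]] by metis
    qed
    show "in_Wmon C (Q (capex C)) (\<lambda>a. Q (ctheta_ob C a)) (\<lambda>a. QM (cleg C a))"
      unfolding in_Wmon_def using fin disc inj_mono[OF hh inj]
      unfolding h_def I_def ap_def by blast
  qed
  thus ?thesis using FQ unfolding pedigrad_def Q_def QM_def by blast
qed

end
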